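(* Assume the setting described in the context, with $\delta:=\frac{1}{2C(\alpha,\lambda)}$. Take $r>0$ such that $q:=C(\alpha,\lambda)\,\ell_h(r)<1$ and set $$r^*=\frac{r(1-q)}{\max_{1\le i\le n}\sup_{t\ge t_0}\big|E_\alpha\big(\lambda_i\big(\frac{t^\rho-t_0^\rho}{\rho}\big)^{\alpha}\big)\big|}.$$ Let $B_{C_\infty}(0,r)=\{\xi\in C_\infty([t_0,\infty),\mathbb{C}^d):\|\xi\|_\infty\le r\}$. Then for every $x\in\mathbb{C}^d$ with $\|x\|\le r^*$ we have $\mathcal{F}_x(B_{C_\infty}(0,r))\subset B_{C_\infty}(0,r)$ and $$\|\mathcal{F}_x\xi-\mathcal{F}_x\widehat\xi\|_\infty\le q\|\xi-\widehat\xi\|_\infty\quad\text{for all }\xi,\widehat\xi\in B_{C_\infty}(0,r).$$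
   Context: Fix $0<\alpha<1$, $\rho>0$, $t_0>0$. Mittag-Leffler functions: $E_{\alpha,\beta}(z)=\sum_{k\ge0}\frac{z^k}{\Gamma(k\alpha+\beta)}$, $E_\alpha=E_{\alpha,1}$. Let $A\in\mathbb{R}^{d\times d}$ with $\sigma(A)\subset\{\lambda\in\mathbb{C}:|\arg\lambda|>\frac{\alpha\pi}{2}\}$, and let $f:\mathbb{R}^d\to\mathbb{R}^d$ be locally Lipschitz with $f(0)=0$ and $\lim_{r\to0}\ell_f(r)=0$, where $\ell_f(r)=\sup_{x,y\in B(0,r),x\ne y}\|f(x)-f(y)\|/\|x-y\|$. Let $T\in\mathbb{C}^{d\times d}$ be nonsingular with $T^{-1}AT=\mathrm{diag}(A_1,\dots,A_n)$ (Jordan form), $A_i=\lambda_iI_{d_i}+\eta_iN_{d_i}$, $\eta_i\in\{0,1\}$, $N_{d_i}$ the $d_i\times d_i$ matrix with ones on the superdiagonal and zeros elsewhere, $\lambda=(\lambda_1,\dots,\lambda_n)$. There is a constant $C(\alpha,\lambda)>0$ depending only on $\alpha,\lambda$ with $\sup_{t\ge a}\int_a^t\big|\big(\frac{t^\rho-s^\rho}{\rho}\big)^{\alpha-1}E_{\alpha,\alpha}\big(\lambda_i\big(\frac{t^\rho-s^\rho}{\rho}\big)^{\alpha}\big)s^{\rho-1}\big|ds\le C(\alpha,\lambda)$ for all $i$ and $a>0$ (it is the constant of the Lipschitz estimate $\|\mathcal{F}_x\xi-\mathcal{F}_x\widehat\xi\|_\infty\le C(\alpha,\lambda)\ell_h(\max(\|\xi\|_\infty,\|\widehat\xi\|_\infty))\|\xi-\widehat\xi\|_\infty$).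 For $\delta>0$ let $P=\mathrm{diag}(P_1,\dots,P_n)$, $P_i=\mathrm{diag}(1,\delta,\dots,\delta^{d_i-1})$, so $P_i^{-1}A_iP_i=\lambda_iI_{d_i}+\delta_iN_{d_i}$, $\delta_i\in\{0,\delta\}$. Put $J_i=\lambda_iI_{d_i}$, $h(y)=\mathrm{diag}(\delta_1N_{d_1},\dots,\delta_nN_{d_n})y+(TP)^{-1}f(TPy)$, and $\ell_h(r)=\sup_{y,z\in B(0,r),y\ne z}\|h(y)-h(z)\|/\|y-z\|$. $C_\infty([t_0,\infty),\mathbb{C}^d)$ is the space of bounded continuous functions with $\|\xi\|_\infty=\sup_{t\ge t_0}\|\xi(t)\|$. With $x=(x^1,\dots,x^n)\in\mathbb{C}^{d_1}\times\dots\times\mathbb{C}^{d_n}$ and $h=(h^1,\dots,h^n)$, define $\mathcal{F}_x$ by $$(\mathcal{F}_x\xi)^i(t)=E_\alpha\Big(\Big(\tfrac{t^\rho-t_0^\rho}{\rho}\Big)^{\alpha}J_i\Big)x^i+\int_{t_0}^t\Big(\tfrac{t^\rho-s^\rho}{\rho}\Big)^{\alpha-1}E_{\alpha,\alpha}\Big(\Big(\tfrac{t^\rho-s^\rho}{\rho}\Big)^{\alpha}J_i\Big)s^{\rho-1}h^i(\xi(s))\,ds.$$ *)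

theory Defs
  imports "HOL-Analysis.Analysis"
begin

definition mittag_leffler :: "real \<Rightarrow> real \<Rightarrow> complex \<Rightarrow> complex" where
  "mittag_leffler \<alpha> \<beta> z = (\<Sum>k. z ^ k / complex_of_real (Gamma (real k * \<alpha> + \<beta>)))"

definition cnorm :: "complex ^ 'd \<Rightarrow> real" where
  "cnorm x = Max (range (\<lambda>k. cmod (x $ k)))"

definition rnorm :: "real ^ 'd \<Rightarrow> real" where
  "rnorm x = Max (range (\<lambda>k. \<bar>x $ k\<bar>))"

definition lip_quot :: "('a::ab_group_add \<Rightarrow> real) \<Rightarrow> ('a \<Rightarrow> 'a) \<Rightarrow> real \<Rightarrow> real set" where
  "lip_quot nrm g r =
     {nrm (g x - g y) / nrm (x - y) | x y. nrm x \<le> r \<and> nrm y \<le> r \<and> x \<noteq> y}"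

definition lip_const :: "('a::ab_group_add \<Rightarrow> real) \<Rightarrow> ('a \<Rightarrow> 'a) \<Rightarrow> real \<Rightarrow> real" where
  "lip_const nrm g r = Sup (lip_quot nrm g r)"

definition kern :: "real \<Rightarrow> real \<Rightarrow> complex \<Rightarrow> real \<Rightarrow> real \<Rightarrow> complex" where
  "kern \<alpha> \<rho> lam t s =
     (let u = (t powr \<rho> - s powr \<rho>) / \<rho> in
      complex_of_real (u powr (\<alpha> - 1)) * mittag_leffler \<alpha> \<alpha> (lam * complex_of_real (u powr \<alpha>))
        * complex_of_real (s powr (\<rho> - 1)))"

definition Cinf :: "real \<Rightarrow> (real \<Rightarrow> complex ^ 'd) set" where
  "Cinf t0 = {\<xi>. continuous_on {t0..} \<xi> \<and> bdd_above ((\<lambda>t. cnorm (\<xi> t)) ` {t0..})}"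

definition sup_norm :: "real \<Rightarrow> (real \<Rightarrow> complex ^ 'd) \<Rightarrow> real" where
  "sup_norm t0 \<xi> = (SUP t\<in>{t0..}. cnorm (\<xi> t))"

definition Cball :: "real \<Rightarrow> real \<Rightarrow> (real \<Rightarrow> complex ^ 'd) set" where
  "Cball t0 r = {\<xi> \<in> Cinf t0. sup_norm t0 \<xi> \<le> r}"

text \<open>Block data: coordinate k lies in block blk k at position pos k.
  Jordan matrix diag(A_1,...,A_n), A_i = lam_i I + eta_i N.\<close>
definition jordan_mat :: "('d \<Rightarrow> nat) \<Rightarrow> ('d \<Rightarrow> nat) \<Rightarrow> (nat \<Rightarrow> complex) \<Rightarrow> (nat \<Rightarrow> bool)
    \<Rightarrow> complex ^ 'd ^ 'd" where
  "jordan_mat blk pos lam eta = (\<chi> p q.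
     if blk p = blk q then
       (if pos p = pos q then lam (blk p)
        else if pos q = pos p + 1 \<and> eta (blk p) then 1 else 0)
     else 0)"

definition nil_mat :: "('d \<Rightarrow> nat) \<Rightarrow> ('d \<Rightarrow> nat) \<Rightarrow> (nat \<Rightarrow> bool) \<Rightarrow> real
    \<Rightarrow> complex ^ 'd ^ 'd" where
  "nil_mat blk pos eta \<delta> = (\<chi> p q.
     if blk p = blk q \<and> pos q = pos p + 1 \<and> eta (blk p) then complex_of_real \<delta> else 0)"

definition scale_mat :: "('d \<Rightarrow> nat) \<Rightarrow> real \<Rightarrow> complex ^ 'd ^ 'd" where
  "scale_mat pos \<delta> = (\<chi> p q. if p = q then complex_of_real (\<delta> ^ pos p) else 0)"

definition cmat_of :: "real ^ 'd ^ 'd \<Rightarrow> complex ^ 'd ^ 'd" where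
  "cmat_of A = (\<chi> i j. complex_of_real (A $ i $ j))"

definition cvec_of :: "real ^ 'd \<Rightarrow> complex ^ 'd" where
  "cvec_of x = (\<chi> i. complex_of_real (x $ i))"

definition re_vec :: "complex ^ 'd \<Rightarrow> real ^ 'd" where
  "re_vec y = (\<chi> i. Re (y $ i))"

text \<open>h(y) = diag(delta_i N_{d_i}) y + (TP)^{-1} f(TPy); f (defined on R^d) is applied
  to the real part of TPy.\<close>
definition hfun :: "('d \<Rightarrow> nat) \<Rightarrow> ('d \<Rightarrow> nat) \<Rightarrow> (nat \<Rightarrow> bool) \<Rightarrow> real
    \<Rightarrow> complex ^ 'd ^ 'd \<Rightarrow> (real ^ 'd \<Rightarrow> real ^ 'd) \<Rightarrow> complex ^ 'd \<Rightarrow> complex ^ 'd" where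
  "hfun blk pos eta \<delta> T f y =
     nil_mat blk pos eta \<delta> *v y
     + matrix_inv (T ** scale_mat pos \<delta>)
         *v cvec_of (f (re_vec ((T ** scale_mat pos \<delta>) *v y)))"

definition Fop :: "real \<Rightarrow> real \<Rightarrow> real \<Rightarrow> ('d \<Rightarrow> nat) \<Rightarrow> (nat \<Rightarrow> complex)
    \<Rightarrow> (complex ^ 'd \<Rightarrow> complex ^ 'd) \<Rightarrow> complex ^ 'd \<Rightarrow> (real \<Rightarrow> complex ^ 'd) \<Rightarrow> real \<Rightarrow> complex ^ 'd" where
  "Fop \<alpha> \<rho> t0 blk lam h x \<xi> t = (\<chi> k.
     mittag_leffler \<alpha> 1 (lam (blk k) * complex_of_real (((t powr \<rho> - t0 powr \<rho>) / \<rho>) powr \<alpha>)) * x $ k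
     + integral {t0..t} (\<lambda>s. kern \<alpha> \<rho> (lam (blk k)) t s * h (\<xi> s) $ k))"

end

theory Submission
  imports Defs
begin

definition mlc :: "real \<Rightarrow> real \<Rightarrow> nat \<Rightarrow> complex" where
  "mlc a b k = inverse (complex_of_real (Gamma (real k * a + b)))"

lemma ml_eq: "mittag_leffler a b z = (\<Sum>k. mlc a b k * z ^ k)"
  unfolding mittag_leffler_def mlc_def by (simp add: divide_inverse mult.commute)

lemma exp_term_le:
  fixes x :: real assumes "0 \<le> x"
  shows "x ^ m / fact m \<le> exp x"
proof -
  have s: "summable (\<lambda>n. x ^ n / fact n)"
    using summable_exp[of x] by (simp add: divide_inverse mult.commute)
  have "x ^ m / fact m = (\<Sum>n\<in>{m}. x ^ n / fact n)" by simp
  also have "\<dots> \<le> (\<Sum>n. x ^ n / fact n)"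
    by (rule sum_le_suminf[OF s]) (use assms in auto)
  also have "\<dots> = exp x" by (simp add: exp_def inverse_eq_divide field_simps)
  finally show ?thesis .
qed

lemma Gamma_ge_fact:
  fixes x :: real assumes "x \<ge> 2"
  shows "fact (nat \<lfloor>x\<rfloor> - 1) \<le> Gamma x"
proof -
  define m where "m = nat \<lfloor>x\<rfloor> - 1"
  have f2: "\<lfloor>x\<rfloor> \<ge> 2" using assms by linarith
  have n1: "nat \<lfloor>x\<rfloor> \<ge> 1" using nat_mono[OF f2] by simp
  have r1: "real m = real (nat \<lfloor>x\<rfloor>) - 1" unfolding m_def using n1 by (simp add: of_nat_diff)
  have r2: "real (nat \<lfloor>x\<rfloor>) = of_int \<lfloor>x\<rfloor>" by (rule of_nat_nat) (use f2 in linarith)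
  have fl: "real m + 1 = of_int \<lfloor>x\<rfloor>" using r1 r2 by simp
  have "real m + 1 \<le> x" using fl by linarith
  moreover have "real m + 1 \<ge> 3/2" using fl f2 by linarith
  ultimately have "Gamma (real m + 1) \<le> Gamma x"
    using Gamma_real_strict_mono[of "real m + 1" x] by (cases "real m + 1 = x") auto
  moreover have "Gamma (real m + 1) = fact m"
    using Gamma_fact[of m, where 'a=real] by (simp add: add.commute)
  ultimately show ?thesis unfolding m_def by simp
qed

lemma ml_summable:
  assumes a: "0 < a" and b: "0 < b"
  shows "summable (\<lambda>k. mlc a b k * z ^ k)"
proof -
  define c where "c = max 1 (cmod z)"
  define E where "E = c powr (1/a)"
  define q where "q = (1/2::real) powr a"
  define K where "K = 4 * E^2 * exp (2*E)"
  have c1: "c \<ge> 1" unfolding c_def by simp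
  have E1: "E \<ge> 1" unfolding E_def using c1 a by (simp add: ge_one_powr_ge_zero)
  have q: "0 < q" "q < 1" unfolding q_def using a by (auto simp: powr01_less_one)
  have sK: "summable (\<lambda>k. K * q ^ k)"
    using q by (intro summable_mult summable_geometric) auto
  obtain N :: nat where N: "real N \<ge> 2 / a" using real_arch_simple by blast
  show ?thesis
  proof (rule summable_comparison_test'[OF sK])
    fix k assume kN: "N \<le> k"
    define x where "x = real k * a + b"
    define m where "m = nat \<lfloor>x\<rfloor> - 1"
    have "real k * a \<ge> 2" using N kN a
      by (metis divide_le_eq mult.commute of_nat_le_iff order.trans)
    hence x2: "x \<ge> 2" unfolding x_def using b by linarith
    have Gx: "fact m \<le> Gamma x" unfolding m_def by (rule Gamma_ge_fact[OF x2])
    have mx: "real m \<ge> real k * a - 2"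
      using x2 b unfolding m_def x_def by (simp add: of_nat_diff) linarith
    have fpos: "(0::real) < fact m" by simp
    have n1: "norm (mlc a b k * z ^ k) = cmod z ^ k / Gamma x"
      unfolding mlc_def x_def using x2 x_def
      by (simp add: norm_mult norm_power norm_inverse divide_inverse mult.commute)
    have "cmod z ^ k \<le> c ^ k" unfolding c_def by (intro power_mono) auto
    also have "c ^ k = E powr (real k * a)"
      unfolding E_def using c1 a by (simp add: powr_powr powr_realpow)
    also have "\<dots> \<le> E powr (real m + 2)"
      using E1 mx by (intro powr_mono) auto
    also have "\<dots> = E^2 * E^m"
      using E1 by (simp add: powr_add powr_realpow power_add mult.commute)
    finally have ck: "cmod z ^ k \<le> E^2 * E^m" .
    have "E^m / fact m = (2*E)^m / fact m * (1/2)^m"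
      by (simp add: power_mult_distrib field_simps)
    also have "\<dots> \<le> exp (2*E) * (1/2)^m"
      using E1 by (intro mult_right_mono exp_term_le) auto
    finally have em: "E^m / fact m \<le> exp (2*E) * (1/2)^m" .
    have "(1/2::real)^m = (1/2) powr (real m)" by (simp add: powr_realpow)
    also have "\<dots> \<le> (1/2) powr (real k * a - 2)"
      using mx by (intro powr_mono') auto
    also have "\<dots> = (1/2) powr (real k * a) / (1/2) powr 2" by (simp add: powr_diff)
    also have "(1/2::real) powr (real k * a) = q^k"
    proof -
      have "q^k = q powr real k" using q by (simp add: powr_realpow)
      also have "\<dots> = (1/2) powr (real k * a)" unfolding q_def by (simp add: powr_powr mult.commute)
      finally show ?thesis by simp
    qed
    also have "(1/2::real) powr 2 = 1/4" by (simp add: powr_numeral power2_eq_square)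
    also have "q^k / (1/4) = 4 * q^k" by simp
    finally have hm: "(1/2::real)^m \<le> 4 * q^k" .
    have "cmod z ^ k / Gamma x \<le> E^2 * E^m / fact m"
    proof -
      have "Gamma x > 0" using x2 by simp
      have "cmod z ^ k / Gamma x \<le> cmod z ^ k / fact m"
        using Gx fpos \<open>Gamma x > 0\<close> by (intro divide_left_mono) (auto intro!: mult_pos_pos)
      also have "\<dots> \<le> E^2 * E^m / fact m" using ck fpos by (intro divide_right_mono) auto
      finally show ?thesis .
    qed
    also have "\<dots> = E^2 * (E^m / fact m)" by simp
    also have "\<dots> \<le> E^2 * (exp (2*E) * (4 * q^k))"
      using em hm by (intro mult_left_mono order.trans[OF em] mult_left_mono hm) auto
    also have "\<dots> = K * q^k" unfolding K_def by simp
    finally show "norm (mlc a b k * z ^ k) \<le> K * q ^ k" using n1 by simp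
  qed
qed

lemma ml_fun: "mittag_leffler a b = (\<lambda>z. \<Sum>k. mlc a b k * z ^ k)"
  using ml_eq by blast

lemma ml_isCont: "0 < a \<Longrightarrow> 0 < b \<Longrightarrow> isCont (mittag_leffler a b) z"
  unfolding ml_fun by (rule isCont_powser_converges_everywhere, rule ml_summable)

lemma ml_zero: "mittag_leffler a 1 0 = 1"
  unfolding ml_eq mlc_def by (simp add: powser_zero)

lemma diffs_mlc:
  assumes a: "0 < a"
  shows "diffs (mlc a 1) k = mlc a a k / of_real a"
proof -
  define y where "y = real k * a + a"
  have y: "y > 0" unfolding y_def using a by (simp add: add_nonneg_pos)
  have g1: "Gamma (y + 1) = y * Gamma y"
    by (rule Gamma_plus1) (use y in \<open>auto elim!: nonpos_Ints_cases\<close>)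
  have g2: "real (Suc k) * a + 1 = y + 1" unfolding y_def by (simp add: algebra_simps)
  have g3: "y = real (Suc k) * a" unfolding y_def by (simp add: algebra_simps)
  have g4: "Gamma y > 0" using y by simp
  have eq: "real (Suc k) / Gamma (real (Suc k) * a + 1) = inverse (Gamma y) / a"
  proof -
    have "real (Suc k) / Gamma (real (Suc k) * a + 1) = real (Suc k) / (real (Suc k) * a * Gamma y)"
      using g1 g2 g3 by simp
    also have "\<dots> = inverse (Gamma y) / a"
    proof -
      have "real (Suc k) * a * Gamma y > 0" using g4 a by simp
      thus ?thesis using g4 a by (simp add: field_simps)
    qed
    finally show ?thesis .
  qed
  have l: "diffs (mlc a 1) k = of_real (real (Suc k) / Gamma (real (Suc k) * a + 1))"
    unfolding diffs_def mlc_def by (simp add: divide_inverse of_real_inverse)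
  have r: "mlc a a k / of_real a = of_real (inverse (Gamma y) / a)"
    unfolding mlc_def y_def by (simp add: of_real_inverse)
  show ?thesis by (simp only: l r eq)
qed

lemma ml_deriv:
  assumes a: "0 < a"
  shows "(mittag_leffler a 1 has_field_derivative mittag_leffler a a z / of_real a) (at z)"
proof -
  have "((\<lambda>z. \<Sum>k. mlc a 1 k * z ^ k) has_field_derivative (\<Sum>k. diffs (mlc a 1) k * z ^ k)) (at z)"
    by (rule termdiffs_strong_converges_everywhere, rule ml_summable) (use a in auto)
  moreover have "(\<Sum>k. diffs (mlc a 1) k * z ^ k) = (\<Sum>k. mlc a a k * z ^ k) / of_real a"
  proof -
    have "(\<Sum>k. diffs (mlc a 1) k * z ^ k) = (\<Sum>k. (mlc a a k * z ^ k) / of_real a)"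
      using diffs_mlc[OF a] by simp
    also have "\<dots> = (\<Sum>k. mlc a a k * z ^ k) / of_real a"
      by (rule suminf_divide, rule ml_summable) (use a in auto)
    finally show ?thesis .
  qed
  ultimately show ?thesis unfolding ml_fun by simp
qed

lemma tendsto_ml[tendsto_intros]:
  "0 < a \<Longrightarrow> 0 < b \<Longrightarrow> (f \<longlongrightarrow> l) F \<Longrightarrow> ((\<lambda>x. mittag_leffler a b (f x)) \<longlongrightarrow> mittag_leffler a b l) F"
  by (rule isCont_tendsto_compose[OF ml_isCont])

lemma continuous_on_ml[continuous_intros]:
  "0 < a \<Longrightarrow> 0 < b \<Longrightarrow> continuous_on S f \<Longrightarrow> continuous_on S (\<lambda>x. mittag_leffler a b (f x))"
  unfolding continuous_on_def by (auto intro: tendsto_ml)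

lemma continuous_ml[continuous_intros]:
  "0 < a \<Longrightarrow> 0 < b \<Longrightarrow> continuous F f \<Longrightarrow> continuous F (\<lambda>x. mittag_leffler a b (f x))"
  unfolding continuous_def by (auto intro: tendsto_ml)

lemma U_deriv:
  assumes "0 < \<rho>" "0 < s"
  shows "((\<lambda>s. (t powr \<rho> - s powr \<rho>) / \<rho>) has_real_derivative - (s powr (\<rho> - 1))) (at s)"
proof -
  have "((\<lambda>s. t powr \<rho> - s powr \<rho>) has_real_derivative (0 - \<rho> * s powr (\<rho> - 1))) (at s)"
    using assms by (intro DERIV_diff DERIV_const has_real_derivative_powr) auto
  hence "((\<lambda>s. (t powr \<rho> - s powr \<rho>) / \<rho>) has_real_derivative (0 - \<rho> * s powr (\<rho> - 1)) / \<rho>) (at s)"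
    by (rule DERIV_cdivide)
  thus ?thesis using assms by simp
qed

lemma U_pos:
  fixes \<rho> s t :: real
  assumes "0 < \<rho>" "0 < s" "s < t"
  shows "(t powr \<rho> - s powr \<rho>) / \<rho> > 0"
  using assms powr_less_mono2[of \<rho> s t] by simp

lemma V_deriv:
  assumes "0 < \<rho>" "0 < s" "s < t"
  shows "((\<lambda>s. ((t powr \<rho> - s powr \<rho>) / \<rho>) powr \<alpha>) has_real_derivative
           \<alpha> * ((t powr \<rho> - s powr \<rho>) / \<rho>) powr (\<alpha> - 1) * - (s powr (\<rho> - 1))) (at s)"
  using DERIV_fun_powr[OF U_deriv[OF assms(1,2)] U_pos[OF assms], of \<alpha>] by simp

lemma H_deriv:
  assumes a: "0 < \<alpha>" and r: "0 < \<rho>" and s: "0 < s" "s < t"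
  shows "((\<lambda>s. mittag_leffler \<alpha> 1 (lam * complex_of_real (((t powr \<rho> - s powr \<rho>) / \<rho>) powr \<alpha>)))
           has_vector_derivative (- (lam * kern \<alpha> \<rho> lam t s))) (at s within X)"
proof -
  define u where "u = (t powr \<rho> - s powr \<rho>) / \<rho>"
  define V' where "V' = \<alpha> * u powr (\<alpha> - 1) * - (s powr (\<rho> - 1))"
  have d1: "((\<lambda>s. lam * complex_of_real (((t powr \<rho> - s powr \<rho>) / \<rho>) powr \<alpha>))
      has_vector_derivative lam * complex_of_real V') (at s within X)"
    unfolding V'_def u_def
    by (rule has_vector_derivative_mult_right, rule has_vector_derivative_of_real,
        rule has_field_derivative_at_within, rule V_deriv[OF r s])
  have d2: "(mittag_leffler \<alpha> 1 has_field_derivative mittag_leffler \<alpha> \<alpha> (lam * complex_of_real (u powr \<alpha>)) / of_real \<alpha>)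
      (at (lam * complex_of_real (u powr \<alpha>)) within Y)" for Y
    by (rule has_field_derivative_at_within, rule ml_deriv[OF a])
  have "((mittag_leffler \<alpha> 1 \<circ> (\<lambda>s. lam * complex_of_real (((t powr \<rho> - s powr \<rho>) / \<rho>) powr \<alpha>)))
      has_vector_derivative (lam * complex_of_real V' *
        (mittag_leffler \<alpha> \<alpha> (lam * complex_of_real (u powr \<alpha>)) / of_real \<alpha>))) (at s within X)"
    by (rule field_vector_diff_chain_within[OF d1]) (use d2 u_def in simp)
  moreover have "lam * complex_of_real V' *
        (mittag_leffler \<alpha> \<alpha> (lam * complex_of_real (u powr \<alpha>)) / of_real \<alpha>) = - (lam * kern \<alpha> \<rho> lam t s)"
    unfolding kern_def Let_def u_def[symmetric] V'_def using a by (simp add: field_simps)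
  ultimately show ?thesis by (simp add: o_def)
qed

lemma kern_nonneg_int:
  assumes "(\<lambda>s. cmod (kern \<alpha> \<rho> lam t s)) integrable_on {a..t}"
  shows "integral {a..t} (\<lambda>s. cmod (kern \<alpha> \<rho> lam t s)) \<ge> 0"
  by (rule integral_nonneg[OF assms]) auto

lemma ml_bound:
  assumes a: "0 < \<alpha>" and r: "0 < \<rho>" and t0: "0 < t0" "t0 \<le> t"
    and int: "(\<lambda>s. cmod (kern \<alpha> \<rho> lam t s)) integrable_on {t0..t}"
    and C: "integral {t0..t} (\<lambda>s. cmod (kern \<alpha> \<rho> lam t s)) \<le> C"
  shows "cmod (mittag_leffler \<alpha> 1 (lam * complex_of_real (((t powr \<rho> - t0 powr \<rho>) / \<rho>) powr \<alpha>)))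
         \<le> 1 + cmod lam * C"
proof -
  have C0: "C \<ge> 0" using kern_nonneg_int[OF int] C by linarith
  define H where "H = (\<lambda>s. mittag_leffler \<alpha> 1 (lam * complex_of_real (((t powr \<rho> - s powr \<rho>) / \<rho>) powr \<alpha>)))"
  have Ht: "H t = 1" unfolding H_def by (simp add: ml_zero)
  show ?thesis
  proof (cases "t0 = t")
    case True
    then show ?thesis using Ht C0 unfolding H_def by simp
  next
    case False
    hence tt: "t0 < t" using t0 by simp
    have bnd: "norm (H b - H t0) \<le> cmod lam * C" if b: "t0 \<le> b" "b < t" for b
    proof -
      have "((\<lambda>s. - (lam * kern \<alpha> \<rho> lam t s)) has_integral (H b - H t0)) {t0..b}"
      proof (rule fundamental_theorem_of_calculus[OF b(1)])
        fix x assume "x \<in> {t0..b}"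
        hence x: "0 < x" "x < t" using t0 b by auto
        show "(H has_vector_derivative (- (lam * kern \<alpha> \<rho> lam t x))) (at x within {t0..b})"
          unfolding H_def by (rule H_deriv[OF a r x])
      qed
      hence hi: "(\<lambda>s. - (lam * kern \<alpha> \<rho> lam t s)) integrable_on {t0..b}"
        and hv: "integral {t0..b} (\<lambda>s. - (lam * kern \<alpha> \<rho> lam t s)) = H b - H t0"
        by (auto simp: has_integral_iff)
      have intb: "(\<lambda>s. cmod (kern \<alpha> \<rho> lam t s)) integrable_on {t0..b}"
        by (rule integrable_on_subinterval[OF int]) (use b in auto)
      have "norm (H b - H t0) \<le> integral {t0..b} (\<lambda>s. cmod lam * cmod (kern \<alpha> \<rho> lam t s))"
        unfolding hv[symmetric]
        by (rule integral_norm_bound_integral[OF hi])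
           (auto intro: integrable_on_cmult_left[OF intb, of "cmod lam", simplified] simp: norm_mult)
      also have "\<dots> = cmod lam * integral {t0..b} (\<lambda>s. cmod (kern \<alpha> \<rho> lam t s))" by simp
      also have "\<dots> \<le> cmod lam * integral {t0..t} (\<lambda>s. cmod (kern \<alpha> \<rho> lam t s))"
        by (intro mult_left_mono integral_subset_le intb int) (use b in auto)
      also have "\<dots> \<le> cmod lam * C" by (intro mult_left_mono C) auto
      finally show ?thesis .
    qed
    have lim: "((\<lambda>b. norm (H b - H t0)) \<longlongrightarrow> norm (H t - H t0)) (at_left t)"
    proof -
      have "((\<lambda>b. (t powr \<rho> - b powr \<rho>) / \<rho>) \<longlongrightarrow> (t powr \<rho> - t powr \<rho>) / \<rho>) (at_left t)"
        using tt t0 r by (intro tendsto_intros) auto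
      hence l0: "((\<lambda>b. (t powr \<rho> - b powr \<rho>) / \<rho>) \<longlongrightarrow> 0) (at_left t)" by simp
      have ev: "\<forall>\<^sub>F b in at_left t. 0 \<le> (t powr \<rho> - b powr \<rho>) / \<rho>"
      proof -
        have "\<forall>\<^sub>F b in at_left t. b \<in> {t0<..<t}" by (rule eventually_at_left_real[OF tt])
        thus ?thesis
        proof eventually_elim
          case (elim b)
          hence "b powr \<rho> \<le> t powr \<rho>" using t0 r by (intro powr_mono2) auto
          thus ?case using r by simp
        qed
      qed
      have "((\<lambda>b. ((t powr \<rho> - b powr \<rho>) / \<rho>) powr \<alpha>) \<longlongrightarrow> 0) (at_left t)"
        by (rule tendsto_zero_powrI[OF l0 tendsto_const ev a])
      hence "(H \<longlongrightarrow> mittag_leffler \<alpha> 1 (lam * complex_of_real 0)) (at_left t)"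
        unfolding H_def using a by (intro tendsto_intros) auto
      hence "(H \<longlongrightarrow> H t) (at_left t)" using Ht by (simp add: ml_zero)
      thus ?thesis by (intro tendsto_intros)
    qed
    have "norm (H t - H t0) \<le> cmod lam * C"
    proof (rule tendsto_upperbound[OF lim])
      show "\<forall>\<^sub>F b in at_left t. norm (H b - H t0) \<le> cmod lam * C"
        using eventually_at_left_real[OF tt] by eventually_elim (use bnd in auto)
      show "\<not> trivial_limit (at_left t)" by simp
    qed
    hence "norm (H t0) \<le> 1 + cmod lam * C" using Ht norm_triangle_ineq3[of "H t" "H t0"]
      by (simp add: norm_minus_commute)
    thus ?thesis unfolding H_def by simp
  qed
qed

lemma kern_cont_joint:
  assumes a: "0 < \<alpha>" and r: "0 < \<rho>"
  shows "continuous_on {p. 0 < snd p \<and> snd p < fst p} (\<lambda>p. kern \<alpha> \<rho> lam (fst p) (snd p))"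
proof -
  have u: "(fst p powr \<rho> - snd p powr \<rho>) / \<rho> > 0" if "p \<in> {p. 0 < snd p \<and> snd p < fst p}" for p :: "real \<times> real"
    using U_pos[OF r, of "snd p" "fst p"] that by auto
  have ne: "x powr \<rho> \<noteq> y powr \<rho>" if "0 < y" "y < x" for x y :: real
    using powr_less_mono2[of \<rho> y x] that r by auto
  show ?thesis unfolding kern_def Let_def
    using u a r ne by (intro continuous_intros) (auto simp: less_imp_le)
qed

lemma kern_cont_s:
  assumes a: "0 < \<alpha>" and r: "0 < \<rho>" and "0 < a"
  shows "continuous_on {a..<t} (kern \<alpha> \<rho> lam t)"
proof -
  have "continuous_on {a..<t} ((\<lambda>p. kern \<alpha> \<rho> lam (fst p) (snd p)) \<circ> (\<lambda>s. (t, s)))"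
    by (rule continuous_on_compose, intro continuous_intros,
        rule continuous_on_subset[OF kern_cont_joint[OF a r]]) (use assms in auto)
  thus ?thesis by (simp add: o_def)
qed

lemma kern_integrable:
  assumes a: "0 < \<alpha>" and r: "0 < \<rho>" and a0: "0 < a" "a \<le> t"
    and int: "(\<lambda>s. cmod (kern \<alpha> \<rho> lam t s)) integrable_on {a..t}"
    and g: "continuous_on {a..t} g" and B: "\<And>s. s \<in> {a..t} \<Longrightarrow> norm (g s) \<le> B"
  shows "(\<lambda>s. kern \<alpha> \<rho> lam t s * g s) integrable_on {a..t}"
proof -
  have ins: "{a..t} = insert t {a..<t}" using a0 by auto
  have cont: "continuous_on {a..<t} (\<lambda>s. kern \<alpha> \<rho> lam t s * g s)"
    by (intro continuous_intros kern_cont_s[OF a r a0(1)] continuous_on_subset[OF g]) auto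
  have meas: "(\<lambda>s. kern \<alpha> \<rho> lam t s * g s) \<in> borel_measurable (lebesgue_on {a..<t})"
    by (rule continuous_imp_measurable_on_sets_lebesgue[OF cont]) simp
  have int2: "(\<lambda>s. B * cmod (kern \<alpha> \<rho> lam t s)) integrable_on {a..<t}"
    using integrable_on_cmult_left[OF int, of B] ins by (simp add: integrable_on_insert_iff)
  have "(\<lambda>s. kern \<alpha> \<rho> lam t s * g s) absolutely_integrable_on {a..<t}"
  proof (rule measurable_bounded_by_integrable_imp_absolutely_integrable[OF meas _ int2])
    fix s assume "s \<in> {a..<t}"
    hence "norm (g s) \<le> B" using B by auto
    thus "norm (kern \<alpha> \<rho> lam t s * g s) \<le> B * cmod (kern \<alpha> \<rho> lam t s)"
      by (simp add: norm_mult mult.commute[of "cmod (kern _ _ _ _ _)"] mult_right_mono)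
  qed simp
  hence "(\<lambda>s. kern \<alpha> \<rho> lam t s * g s) integrable_on {a..<t}"
    using set_lebesgue_integral_eq_integral(1) by blast
  thus ?thesis using ins by (simp add: integrable_on_insert_iff)
qed

lemma kern_norm_bound:
  assumes a: "0 < \<alpha>" and r: "0 < \<rho>" and a0: "0 < a" "a \<le> t"
    and int: "(\<lambda>s. cmod (kern \<alpha> \<rho> lam t s)) integrable_on {a..t}"
    and g: "continuous_on {a..t} g" and B: "\<And>s. s \<in> {a..t} \<Longrightarrow> norm (g s) \<le> B"
  shows "norm (integral {a..t} (\<lambda>s. kern \<alpha> \<rho> lam t s * g s))
           \<le> B * integral {a..t} (\<lambda>s. cmod (kern \<alpha> \<rho> lam t s))"
proof -
  have "norm (integral {a..t} (\<lambda>s. kern \<alpha> \<rho> lam t s * g s))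
           \<le> integral {a..t} (\<lambda>s. B * cmod (kern \<alpha> \<rho> lam t s))"
  proof (rule integral_norm_bound_integral[OF kern_integrable[OF assms]])
    show "(\<lambda>s. B * cmod (kern \<alpha> \<rho> lam t s)) integrable_on {a..t}"
      using integrable_on_cmult_left[OF int, of B] by simp
    fix s assume "s \<in> {a..t}"
    hence "norm (g s) \<le> B" using B by auto
    thus "norm (kern \<alpha> \<rho> lam t s * g s) \<le> B * cmod (kern \<alpha> \<rho> lam t s)"
      by (simp add: norm_mult mult.commute[of "cmod (kern _ _ _ _ _)"] mult_right_mono)
  qed
  thus ?thesis by simp
qed

lemma tail_bound:
  assumes a: "0 < \<alpha>" and r: "0 < \<rho>" and tau: "0 < \<tau>" "\<tau> \<le> t"
    and int: "(\<lambda>s. cmod (kern \<alpha> \<rho> lam t s)) integrable_on {\<tau>..t}"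
    and g: "continuous_on {\<tau>..t} g" and B: "\<And>s. s \<in> {\<tau>..t} \<Longrightarrow> norm (g s) \<le> B"
    and M: "\<And>s. s \<in> {\<tau>..<t} \<Longrightarrow>
       cmod (mittag_leffler \<alpha> \<alpha> (lam * complex_of_real (((t powr \<rho> - s powr \<rho>) / \<rho>) powr \<alpha>))) \<le> M"
    and B0: "0 \<le> B" and M0: "0 \<le> M"
  shows "norm (integral {\<tau>..t} (\<lambda>s. kern \<alpha> \<rho> lam t s * g s))
           \<le> B * M * (((t powr \<rho> - \<tau> powr \<rho>) / \<rho>) powr \<alpha>) / \<alpha>"
proof -
  define w where "w s = ((t powr \<rho> - s powr \<rho>) / \<rho>) powr (\<alpha> - 1) * s powr (\<rho> - 1)" for s
  define F where "F s = - (((t powr \<rho> - s powr \<rho>) / \<rho>) powr \<alpha>) / \<alpha>" for s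
  have Ule: "0 \<le> (t powr \<rho> - s powr \<rho>) / \<rho>" if "0 < s" "s \<le> t" for s
    using powr_mono2[of \<rho> s t] that r by simp
  have hw: "(w has_integral (F t - F \<tau>)) {\<tau>..t}"
  proof (rule fundamental_theorem_of_calculus_interior[OF tau(2)])
    show "continuous_on {\<tau>..t} F" unfolding F_def
      using tau a r Ule
      by (intro continuous_intros continuous_on_powr') (auto simp: less_imp_le)
    fix x assume x: "x \<in> {\<tau><..<t}"
    hence x': "0 < x" "x < t" using tau by auto
    have "(F has_real_derivative (- (\<alpha> * ((t powr \<rho> - x powr \<rho>) / \<rho>) powr (\<alpha> - 1) * - (x powr (\<rho> - 1)))) / \<alpha>) (at x)"
      unfolding F_def by (intro DERIV_cdivide DERIV_minus V_deriv r x')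
    moreover have "(- (\<alpha> * ((t powr \<rho> - x powr \<rho>) / \<rho>) powr (\<alpha> - 1) * - (x powr (\<rho> - 1)))) / \<alpha> = w x"
      unfolding w_def using a by simp
    ultimately show "(F has_vector_derivative w x) (at x)"
      by (simp add: has_real_derivative_iff_has_vector_derivative)
  qed
  have Fval: "F t - F \<tau> = (((t powr \<rho> - \<tau> powr \<rho>) / \<rho>) powr \<alpha>) / \<alpha>"
    unfolding F_def by simp
  have bnd: "norm (kern \<alpha> \<rho> lam t s * g s) \<le> B * M * w s" if s: "s \<in> {\<tau>..t}" for s
  proof (cases "s = t")
    case True
    then show ?thesis unfolding kern_def w_def Let_def by simp
  next
    case False
    hence s': "s \<in> {\<tau>..<t}" using s by auto
    have u0: "0 \<le> (t powr \<rho> - s powr \<rho>) / \<rho>" using Ule[of s] s tau by auto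
    have "norm (kern \<alpha> \<rho> lam t s) = ((t powr \<rho> - s powr \<rho>) / \<rho>) powr (\<alpha> - 1)
        * cmod (mittag_leffler \<alpha> \<alpha> (lam * complex_of_real (((t powr \<rho> - s powr \<rho>) / \<rho>) powr \<alpha>)))
        * s powr (\<rho> - 1)"
      unfolding kern_def Let_def by (simp add: norm_mult)
    also have "\<dots> \<le> ((t powr \<rho> - s powr \<rho>) / \<rho>) powr (\<alpha> - 1) * M * s powr (\<rho> - 1)"
      by (intro mult_right_mono mult_left_mono M s') auto
    also have "\<dots> = M * w s" unfolding w_def by simp
    finally have k: "norm (kern \<alpha> \<rho> lam t s) \<le> M * w s" .
    have "norm (kern \<alpha> \<rho> lam t s * g s) = norm (kern \<alpha> \<rho> lam t s) * norm (g s)"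
      by (simp add: norm_mult)
    also have "\<dots> \<le> (M * w s) * B"
    proof -
      have "0 \<le> M * w s" using M0 unfolding w_def by simp
      thus ?thesis by (intro mult_mono k B s) auto
    qed
    finally show ?thesis by (simp add: mult_ac)
  qed
  have "norm (integral {\<tau>..t} (\<lambda>s. kern \<alpha> \<rho> lam t s * g s)) \<le> integral {\<tau>..t} (\<lambda>s. B * M * w s)"
  proof (rule integral_norm_bound_integral[OF kern_integrable[OF a r tau int g B]])
    show "(\<lambda>s. B * M * w s) integrable_on {\<tau>..t}"
      using integrable_on_cmult_left[OF has_integral_integrable[OF hw], of "B * M"] by simp
  qed (use bnd in auto)
  also have "\<dots> = B * M * (F t - F \<tau>)" using integral_unique[OF hw] by simp
  finally show ?thesis unfolding Fval by simp
qed

lemma ml_bdd: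
  assumes "0 < \<alpha>"
  shows "\<exists>M\<ge>0. \<forall>w. norm w \<le> R \<longrightarrow> cmod (mittag_leffler \<alpha> \<alpha> w) \<le> M"
proof -
  have "compact (mittag_leffler \<alpha> \<alpha> ` cball 0 R)"
    by (intro compact_continuous_image continuous_at_imp_continuous_on ballI ml_isCont assms compact_cball)
  then obtain m where m: "\<forall>y\<in>mittag_leffler \<alpha> \<alpha> ` cball 0 R. norm y \<le> m"
    using compact_imp_bounded bounded_iff by metis
  show ?thesis by (rule exI[of _ "max 0 m"]) (use m in \<open>force simp: le_max_iff_disj\<close>)
qed

lemma int_cont:
  assumes a: "0 < \<alpha>" and r: "0 < \<rho>" and t0: "0 < t0"
    and int: "\<And>t. t0 \<le> t \<Longrightarrow> (\<lambda>s. cmod (kern \<alpha> \<rho> lam t s)) integrable_on {t0..t}"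
    and g: "continuous_on {t0..} g" and B: "\<And>s. t0 \<le> s \<Longrightarrow> norm (g s) \<le> B"
  shows "continuous_on {t0..} (\<lambda>t. integral {t0..t} (\<lambda>s. kern \<alpha> \<rho> lam t s * g s))"
proof -
  define I where "I t = integral {t0..t} (\<lambda>s. kern \<alpha> \<rho> lam t s * g s)" for t
  have B0: "0 \<le> B" using B[of t0] by (meson norm_ge_zero order_trans order_refl)
  have intsub: "(\<lambda>s. cmod (kern \<alpha> \<rho> lam t s)) integrable_on {\<tau>..t}" if "t0 \<le> \<tau>" "\<tau> \<le> t" for \<tau> t
    by (rule integrable_on_subinterval[OF int]) (use that in auto)
  have gsub: "continuous_on {\<tau>..t} g" if "t0 \<le> \<tau>" for \<tau> t
    by (rule continuous_on_subset[OF g]) (use that in auto)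
  have Bsub: "\<And>s. s \<in> {\<tau>..t} \<Longrightarrow> norm (g s) \<le> B" if "t0 \<le> \<tau>" for \<tau> t
    using B that by auto
  have kint: "(\<lambda>s. kern \<alpha> \<rho> lam t s * g s) integrable_on {t0..t}" if "t0 \<le> t" for t
    by (rule kern_integrable[OF a r t0 that int[OF that] gsub Bsub]) auto
  have Ule: "0 \<le> (t powr \<rho> - s powr \<rho>) / \<rho>" if "0 < s" "s \<le> t" for s t
    using powr_mono2[of \<rho> s t] that r by simp
  show ?thesis
    unfolding continuous_on_iff I_def[symmetric]
  proof (intro ballI allI impI)
    fix x e :: real assume x: "x \<in> {t0..}" and e: "0 < e"
    define T where "T = x + 1"
    obtain M where M0: "0 \<le> M"
      and M: "\<And>w. norm w \<le> cmod lam * ((T powr \<rho>) / \<rho>) powr \<alpha> \<Longrightarrow> cmod (mittag_leffler \<alpha> \<alpha> w) \<le> M"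
      using ml_bdd[OF a, of "cmod lam * ((T powr \<rho>) / \<rho>) powr \<alpha>"] by blast
    define om where "om \<tau> t = B * M * (((t powr \<rho> - \<tau> powr \<rho>) / \<rho>) powr \<alpha>) / \<alpha>" for \<tau> t
    have Mb: "cmod (mittag_leffler \<alpha> \<alpha> (lam * complex_of_real (((t powr \<rho> - s powr \<rho>) / \<rho>) powr \<alpha>))) \<le> M"
      if "0 < s" "s \<le> t" "t \<le> T" for s t
    proof (rule M)
      have u0: "0 \<le> (t powr \<rho> - s powr \<rho>) / \<rho>" using Ule that by auto
      have "(t powr \<rho> - s powr \<rho>) / \<rho> \<le> T powr \<rho> / \<rho>"
      proof (rule divide_right_mono)
        have "t powr \<rho> \<le> T powr \<rho>" using powr_mono2[of \<rho> t T] that r by auto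
        moreover have "0 \<le> s powr \<rho>" by simp
        ultimately show "t powr \<rho> - s powr \<rho> \<le> T powr \<rho>" by linarith
      qed (use r in auto)
      hence "((t powr \<rho> - s powr \<rho>) / \<rho>) powr \<alpha> \<le> (T powr \<rho> / \<rho>) powr \<alpha>"
        using u0 a by (intro powr_mono2) auto
      thus "norm (lam * complex_of_real (((t powr \<rho> - s powr \<rho>) / \<rho>) powr \<alpha>)) \<le> cmod lam * ((T powr \<rho>) / \<rho>) powr \<alpha>"
        by (simp add: norm_mult mult_left_mono)
    qed
    have tail: "norm (integral {\<tau>..t} (\<lambda>s. kern \<alpha> \<rho> lam t s * g s)) \<le> om \<tau> t"
      if "t0 \<le> \<tau>" "\<tau> \<le> t" "t \<le> T" for \<tau> t
      unfolding om_def
      by (rule tail_bound[OF a r _ that(2) intsub[OF that(1,2)] gsub[OF that(1)] Bsub[OF that(1)] _ B0 M0])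
         (use that t0 Mb in auto)
    show "\<exists>d>0. \<forall>y\<in>{t0..}. dist y x < d \<longrightarrow> dist (I y) (I x) < e"
    proof (cases "x = t0")
      case True
      have "((\<lambda>t. om t0 t) \<longlongrightarrow> B * M * 0 / \<alpha>) (at t0 within {t0<..})"
      proof -
        have l0: "((\<lambda>t. (t powr \<rho> - t0 powr \<rho>) / \<rho>) \<longlongrightarrow> 0) (at t0 within {t0<..})"
        proof -
          have "((\<lambda>t. (t powr \<rho> - t0 powr \<rho>) / \<rho>) \<longlongrightarrow> (t0 powr \<rho> - t0 powr \<rho>) / \<rho>) (at t0 within {t0<..})"
            using t0 r by (intro tendsto_intros) auto
          thus ?thesis by simp
        qed
        have ev: "\<forall>\<^sub>F t in at t0 within {t0<..}. 0 \<le> (t powr \<rho> - t0 powr \<rho>) / \<rho>"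
          unfolding eventually_at_filter using t0 by (auto intro!: always_eventually Ule)
        show ?thesis unfolding om_def
          using a by (intro tendsto_intros tendsto_zero_powrI[OF l0 tendsto_const ev a]) auto
      qed
      hence "\<forall>\<^sub>F t in at t0 within {t0<..}. om t0 t < e" using e
        by (auto dest: order_tendstoD(2))
      then obtain d where d: "d > 0" and hd: "\<And>t. t \<in> {t0<..} \<Longrightarrow> t \<noteq> t0 \<Longrightarrow> dist t t0 < d \<Longrightarrow> om t0 t < e"
        unfolding eventually_at by blast
      show ?thesis
      proof (intro exI[of _ "min d 1"] conjI ballI impI)
        show "min d 1 > 0" using d by simp
        fix y assume y: "y \<in> {t0..}" "dist y x < min d 1"
        show "dist (I y) (I x) < e"
        proof (cases "y = t0")
          case True
          then show ?thesis using \<open>x = t0\<close> e by (simp add: I_def)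
        next
          case False
          hence yt: "t0 < y" using y by auto
          have "dist (I y) (I x) = norm (I y)" using \<open>x = t0\<close> by (simp add: I_def dist_norm)
          also have "\<dots> \<le> om t0 y" unfolding I_def
            by (rule tail) (use yt y True T_def in \<open>auto simp: dist_real_def\<close>)
          also have "\<dots> < e" using hd[of y] yt y True by auto
          finally show ?thesis .
        qed
      qed
    next
      case False
      hence xt: "t0 < x" using x by auto
      have lim1: "((\<lambda>\<tau>. om \<tau> x) \<longlongrightarrow> B * M * 0 / \<alpha>) (at_left x)"
      proof -
        have l0: "((\<lambda>\<tau>. (x powr \<rho> - \<tau> powr \<rho>) / \<rho>) \<longlongrightarrow> 0) (at_left x)"
        proof -
          have "((\<lambda>\<tau>. (x powr \<rho> - \<tau> powr \<rho>) / \<rho>) \<longlongrightarrow> (x powr \<rho> - x powr \<rho>) / \<rho>) (at_left x)"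
            using xt t0 r by (intro tendsto_intros) auto
          thus ?thesis by simp
        qed
        have ev: "\<forall>\<^sub>F \<tau> in at_left x. 0 \<le> (x powr \<rho> - \<tau> powr \<rho>) / \<rho>"
          using eventually_at_left_real[OF xt] by eventually_elim (use t0 Ule in auto)
        show ?thesis unfolding om_def
          using a by (intro tendsto_intros tendsto_zero_powrI[OF l0 tendsto_const ev a]) auto
      qed
      have "\<forall>\<^sub>F \<tau> in at_left x. om \<tau> x < e / 4"
        using order_tendstoD(2)[OF lim1, of "e / 4"] e by simp
      hence "\<forall>\<^sub>F \<tau> in at_left x. om \<tau> x < e / 4 \<and> \<tau> \<in> {t0<..<x}"
        using eventually_at_left_real[OF xt] by eventually_elim auto
      then obtain \<tau> where tau: "om \<tau> x < e / 4" "t0 < \<tau>" "\<tau> < x"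
        using eventually_happens[of _ "at_left x"] by auto
      define J where "J t = integral {t0..\<tau>} (\<lambda>s. kern \<alpha> \<rho> lam t s * g s)" for t
      define F where "F y s = kern \<alpha> \<rho> lam y s * g s" for y s
      have Fc: "continuous_on ({\<tau><..} \<times> cbox t0 \<tau>) (\<lambda>(y, s). F y s)"
      proof -
        have c1: "continuous_on ({\<tau><..} \<times> cbox t0 \<tau>) (\<lambda>p. kern \<alpha> \<rho> lam (fst p) (snd p))"
          by (rule continuous_on_subset[OF kern_cont_joint[OF a r]]) (use t0 in auto)
        have c2: "continuous_on ({\<tau><..} \<times> cbox t0 \<tau>) (\<lambda>p. g (snd p))"
          by (rule continuous_on_compose2[OF g continuous_on_snd]) auto
        have "(\<lambda>(y, s). F y s) = (\<lambda>p. kern \<alpha> \<rho> lam (fst p) (snd p) * g (snd p))"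
          by (auto simp: F_def fun_eq_iff)
        thus ?thesis using continuous_on_mult[OF c1 c2] by simp
      qed
      have Jc0: "continuous_on {\<tau><..} (\<lambda>y. integral (cbox t0 \<tau>) (F y))"
        by (rule integral_continuous_on_param[OF Fc])
      have "J = (\<lambda>y. integral (cbox t0 \<tau>) (F y))"
        unfolding J_def F_def by (simp add: cbox_interval)
      hence Jc: "continuous_on {\<tau><..} J" using Jc0 by simp
      have xin: "x \<in> {\<tau><..}" using tau by simp
      have "\<exists>d>0. \<forall>y\<in>{\<tau><..}. dist y x < d \<longrightarrow> dist (J y) (J x) < e / 4"
        using Jc[unfolded continuous_on_iff, rule_format, OF xin, of "e / 4"] e by simp
      then obtain d3 where d3: "d3 > 0" "\<And>y. y \<in> {\<tau><..} \<Longrightarrow> dist y x < d3 \<Longrightarrow> dist (J y) (J x) < e / 4"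
        by blast
      have "((\<lambda>t. om \<tau> t) \<longlongrightarrow> om \<tau> x) (at x)"
      proof -
        have "(x powr \<rho> - \<tau> powr \<rho>) / \<rho> \<noteq> 0" using U_pos[OF r, of \<tau> x] tau t0 by auto
        thus ?thesis unfolding om_def using xt t0 r a by (intro tendsto_intros) auto
      qed
      hence "\<forall>\<^sub>F t in at x. dist (om \<tau> t) (om \<tau> x) < e / 4"
        using e unfolding tendsto_iff by (metis zero_less_divide_iff zero_less_numeral)
      then obtain d2 where d2: "d2 > 0" "\<And>t. t \<noteq> x \<Longrightarrow> dist t x < d2 \<Longrightarrow> dist (om \<tau> t) (om \<tau> x) < e / 4"
        unfolding eventually_at by auto
      have om_near: "om \<tau> t < e / 2" if "dist t x < d2" for t
      proof (cases "t = x")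
        case True thus ?thesis using tau e by simp
      next
        case False
        thus ?thesis using d2(2)[OF False that] tau unfolding dist_real_def by linarith
      qed
      have split: "I t = J t + integral {\<tau>..t} (\<lambda>s. kern \<alpha> \<rho> lam t s * g s)" if "\<tau> \<le> t" for t
        unfolding I_def J_def
        using Henstock_Kurzweil_Integration.integral_combine[OF _ that kint[of t]] tau that by auto
      show ?thesis
      proof (intro exI[of _ "min (min d2 d3) (min (x - \<tau>) 1)"] conjI ballI impI)
        show "min (min d2 d3) (min (x - \<tau>) 1) > 0" using d2 d3 tau by simp
        fix y assume y: "y \<in> {t0..}" "dist y x < min (min d2 d3) (min (x - \<tau>) 1)"
        have yt: "\<tau> < y" "y \<le> T" using y unfolding T_def by (auto simp: dist_real_def abs_less_iff)
        have "dist (I y) (I x) = norm ((J y - J x) + integral {\<tau>..y} (\<lambda>s. kern \<alpha> \<rho> lam y s * g s)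
                  - integral {\<tau>..x} (\<lambda>s. kern \<alpha> \<rho> lam x s * g s))"
          using split[of y] split[of x] yt tau by (simp add: dist_norm algebra_simps)
        also have "\<dots> \<le> norm (J y - J x) + norm (integral {\<tau>..y} (\<lambda>s. kern \<alpha> \<rho> lam y s * g s))
                  + norm (integral {\<tau>..x} (\<lambda>s. kern \<alpha> \<rho> lam x s * g s))"
          by (rule order_trans[OF norm_triangle_ineq4 add_right_mono[OF norm_triangle_ineq]])
        also have "\<dots> < e / 4 + e / 2 + e / 4"
        proof -
          have "norm (J y - J x) < e / 4" using d3(2)[of y] yt y by (simp add: dist_norm)
          moreover have "norm (integral {\<tau>..y} (\<lambda>s. kern \<alpha> \<rho> lam y s * g s)) < e / 2"
            using tail[of \<tau> y] om_near[of y] tau yt y by auto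
          moreover have "norm (integral {\<tau>..x} (\<lambda>s. kern \<alpha> \<rho> lam x s * g s)) < e / 4"
            using tail[of \<tau> x] tau T_def by auto
          ultimately show ?thesis by linarith
        qed
        also have "\<dots> = e" by simp
        finally show "dist (I y) (I x) < e" .
      qed
    qed
  qed
qed

lemma cnorm_ge: "cmod (x $ k) \<le> cnorm x"
  unfolding cnorm_def by (rule Max_ge) auto

lemma cnorm_le: "(\<And>k. cmod (x $ k) \<le> c) \<Longrightarrow> cnorm x \<le> c"
  unfolding cnorm_def by (subst Max_le_iff) auto

lemma cnorm_nonneg: "0 \<le> cnorm x"
  using cnorm_ge[of x] norm_ge_zero order_trans by blast

lemma rnorm_ge: "\<bar>x $ k\<bar> \<le> rnorm x"
  unfolding rnorm_def by (rule Max_ge) auto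

lemma rnorm_le: "(\<And>k. \<bar>x $ k\<bar> \<le> c) \<Longrightarrow> rnorm x \<le> c"
  unfolding rnorm_def by (subst Max_le_iff) auto

lemma cnorm_zero[simp]: "cnorm 0 = 0"
  by (intro antisym cnorm_le cnorm_nonneg) simp

lemma cnorm_le_norm: "cnorm x \<le> norm x"
proof (rule cnorm_le)
  fix k show "cmod (x $ k) \<le> norm x" by (rule Finite_Cartesian_Product.norm_nth_le)
qed

lemma norm_le_cnorm: "norm x \<le> of_nat CARD('d) * cnorm (x :: complex ^ 'd)"
proof -
  have "norm x \<le> (\<Sum>i\<in>UNIV. norm (x $ i))" by (simp add: norm_vec_def L2_set_le_sum)
  also have "\<dots> \<le> (\<Sum>i\<in>(UNIV::'d set). cnorm x)" by (intro sum_mono cnorm_ge)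
  also have "\<dots> = of_nat CARD('d) * cnorm x" by simp
  finally show ?thesis .
qed

lemma cnorm_pos: "x \<noteq> 0 \<Longrightarrow> cnorm x > 0"
proof -
  assume "x \<noteq> 0"
  then obtain k where "x $ k \<noteq> 0" by (auto simp: vec_eq_iff)
  hence "0 < cmod (x $ k)" by simp
  thus ?thesis using cnorm_ge[of x k] by linarith
qed

lemma rnorm_pos: "x \<noteq> 0 \<Longrightarrow> rnorm x > 0"
proof -
  assume "x \<noteq> 0"
  then obtain k where "x $ k \<noteq> 0" by (auto simp: vec_eq_iff)
  hence "0 < \<bar>x $ k\<bar>" by simp
  thus ?thesis using rnorm_ge[of x k] by linarith
qed

lemma cnorm_triangle: "cnorm (x + y) \<le> cnorm x + cnorm y"
proof (rule cnorm_le)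
  fix k
  have "cmod ((x + y) $ k) \<le> cmod (x $ k) + cmod (y $ k)" by (simp add: norm_triangle_ineq)
  thus "cmod ((x + y) $ k) \<le> cnorm x + cnorm y" using cnorm_ge[of x k] cnorm_ge[of y k] by linarith
qed

lemma cnorm_diff: "cnorm (x - y) \<le> cnorm x + cnorm y"
proof (rule cnorm_le)
  fix k
  have "cmod ((x - y) $ k) \<le> cmod (x $ k) + cmod (y $ k)" by (simp add: norm_triangle_ineq4)
  thus "cmod ((x - y) $ k) \<le> cnorm x + cnorm y" using cnorm_ge[of x k] cnorm_ge[of y k] by linarith
qed

definition msum :: "complex ^ 'd ^ 'e \<Rightarrow> real" where
  "msum B = (\<Sum>i\<in>UNIV. \<Sum>j\<in>UNIV. cmod (B $ i $ j))"

lemma msum_nonneg: "0 \<le> msum B"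
  unfolding msum_def by (intro sum_nonneg) auto

lemma cnorm_matvec: "cnorm (B *v v) \<le> msum B * cnorm v"
proof (rule cnorm_le)
  fix i
  have "cmod ((B *v v) $ i) = cmod (\<Sum>j\<in>UNIV. B $ i $ j * v $ j)"
    by (simp add: matrix_vector_mult_def)
  also have "\<dots> \<le> (\<Sum>j\<in>UNIV. cmod (B $ i $ j) * cnorm v)"
    by (rule order_trans[OF norm_sum sum_mono]) (auto simp: norm_mult intro: mult_left_mono cnorm_ge)
  also have "\<dots> = (\<Sum>j\<in>UNIV. cmod (B $ i $ j)) * cnorm v" by (simp add: sum_distrib_right)
  also have "\<dots> \<le> msum B * cnorm v"
  proof (rule mult_right_mono[OF _ cnorm_nonneg])
    show "(\<Sum>j\<in>UNIV. cmod (B $ i $ j)) \<le> msum B" unfolding msum_def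
      by (rule member_le_sum[of i UNIV "\<lambda>i. \<Sum>j\<in>UNIV. cmod (B $ i $ j)"]) (auto intro: sum_nonneg)
  qed
  finally show "cmod ((B *v v) $ i) \<le> msum B * cnorm v" .
qed

lemma rnorm_re: "rnorm (re_vec w) \<le> cnorm w"
proof (rule rnorm_le)
  fix k show "\<bar>re_vec w $ k\<bar> \<le> cnorm w"
    using abs_Re_le_cmod[of "w $ k"] cnorm_ge[of w k] by (simp add: re_vec_def)
qed

lemma re_vec_diff: "re_vec (a - b) = re_vec a - re_vec b"
  by (simp add: re_vec_def vec_eq_iff)

lemma re_vec_zero[simp]: "re_vec 0 = 0"
  by (simp add: re_vec_def vec_eq_iff)

lemma cvec_zero[simp]: "cvec_of 0 = 0"
  by (simp add: cvec_of_def vec_eq_iff)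

lemma cnorm_cvec_diff: "cnorm (cvec_of a - cvec_of b) \<le> rnorm (a - b)"
proof (rule cnorm_le)
  fix k show "cmod ((cvec_of a - cvec_of b) $ k) \<le> rnorm (a - b)"
    using rnorm_ge[of "a - b" k] by (simp add: cvec_of_def flip: of_real_diff)
qed

lemma hfun_zero:
  assumes "f 0 = 0"
  shows "hfun blk pos eta \<delta> T f 0 = 0"
  unfolding hfun_def using assms by simp

lemma hfun_lip_exists:
  fixes f :: "real ^ 'd \<Rightarrow> real ^ 'd"
  assumes f_loclip: "\<And>R. 0 < R \<Longrightarrow> bdd_above (lip_quot rnorm f R)"
  shows "\<exists>K. \<forall>y z. cnorm y \<le> r \<longrightarrow> cnorm z \<le> r \<longrightarrow>
     cnorm (hfun blk pos eta \<delta> T f y - hfun blk pos eta \<delta> T f z) \<le> K * cnorm (y - z)"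
proof -
  define P where "P = T ** scale_mat pos \<delta>"
  define Mi where "Mi = matrix_inv P"
  define N where "N = nil_mat blk pos eta \<delta>"
  define R where "R = msum P * max 0 r + 1"
  have R: "0 < R" unfolding R_def using msum_nonneg[of P] by (simp add: add_nonneg_pos)
  define Lf where "Lf = max 0 (Sup (lip_quot rnorm f R))"
  have flip: "rnorm (f a - f b) \<le> Lf * rnorm (a - b)" if "rnorm a \<le> R" "rnorm b \<le> R" for a b
  proof (cases "a = b")
    case True thus ?thesis by (simp add: Lf_def rnorm_def)
  next
    case False
    hence pos: "rnorm (a - b) > 0" by (intro rnorm_pos) simp
    have "rnorm (f a - f b) / rnorm (a - b) \<in> lip_quot rnorm f R"
      unfolding lip_quot_def using that False by blast
    hence "rnorm (f a - f b) / rnorm (a - b) \<le> Sup (lip_quot rnorm f R)"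
      by (rule cSup_upper[OF _ f_loclip[OF R]])
    hence "rnorm (f a - f b) / rnorm (a - b) \<le> Lf" unfolding Lf_def by linarith
    thus ?thesis using pos by (simp add: divide_le_eq mult.commute)
  qed
  have Lf0: "0 \<le> Lf" unfolding Lf_def by simp
  show ?thesis
  proof (intro exI[of _ "msum N + msum Mi * Lf * msum P"] allI impI)
    fix y z :: "complex ^ 'd" assume y: "cnorm y \<le> r" and z: "cnorm z \<le> r"
    define a where "a = re_vec (P *v y)"
    define b where "b = re_vec (P *v z)"
    have ra: "rnorm a \<le> R"
    proof -
      have "rnorm a \<le> cnorm (P *v y)" unfolding a_def by (rule rnorm_re)
      also have "\<dots> \<le> msum P * cnorm y" by (rule cnorm_matvec)
      also have "\<dots> \<le> msum P * max 0 r" using y by (intro mult_left_mono msum_nonneg) auto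
      finally show ?thesis unfolding R_def by simp
    qed
    have rb: "rnorm b \<le> R"
    proof -
      have "rnorm b \<le> cnorm (P *v z)" unfolding b_def by (rule rnorm_re)
      also have "\<dots> \<le> msum P * cnorm z" by (rule cnorm_matvec)
      also have "\<dots> \<le> msum P * max 0 r" using z by (intro mult_left_mono msum_nonneg) auto
      finally show ?thesis unfolding R_def by simp
    qed
    have ab: "rnorm (a - b) \<le> msum P * cnorm (y - z)"
    proof -
      have "a - b = re_vec (P *v (y - z))" unfolding a_def b_def
        by (simp add: re_vec_diff matrix_vector_mult_diff_distrib)
      hence "rnorm (a - b) \<le> cnorm (P *v (y - z))" using rnorm_re by simp
      also have "\<dots> \<le> msum P * cnorm (y - z)" by (rule cnorm_matvec)
      finally show ?thesis .
    qed
    have eq: "hfun blk pos eta \<delta> T f y - hfun blk pos eta \<delta> T f z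
        = N *v (y - z) + Mi *v (cvec_of (f a) - cvec_of (f b))"
      unfolding hfun_def N_def Mi_def P_def a_def b_def
      by (simp add: matrix_vector_mult_diff_distrib algebra_simps)
    have "cnorm (hfun blk pos eta \<delta> T f y - hfun blk pos eta \<delta> T f z)
        \<le> cnorm (N *v (y - z)) + cnorm (Mi *v (cvec_of (f a) - cvec_of (f b)))"
      unfolding eq by (rule cnorm_triangle)
    also have "\<dots> \<le> msum N * cnorm (y - z) + msum Mi * cnorm (cvec_of (f a) - cvec_of (f b))"
      by (intro add_mono cnorm_matvec)
    also have "\<dots> \<le> msum N * cnorm (y - z) + msum Mi * (Lf * (msum P * cnorm (y - z)))"
    proof -
      have "cnorm (cvec_of (f a) - cvec_of (f b)) \<le> rnorm (f a - f b)" by (rule cnorm_cvec_diff)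
      also have "\<dots> \<le> Lf * rnorm (a - b)" by (rule flip[OF ra rb])
      also have "\<dots> \<le> Lf * (msum P * cnorm (y - z))" by (intro mult_left_mono ab Lf0)
      finally show ?thesis by (intro add_left_mono mult_left_mono msum_nonneg)
    qed
    also have "\<dots> = (msum N + msum Mi * Lf * msum P) * cnorm (y - z)" by (simp add: algebra_simps)
    finally show "cnorm (hfun blk pos eta \<delta> T f y - hfun blk pos eta \<delta> T f z)
        \<le> (msum N + msum Mi * Lf * msum P) * cnorm (y - z)" .
  qed
qed

theorem lemma3p1:
  fixes \<alpha> \<rho> t0 C r :: real
    and A :: "real ^ 'd ^ 'd"
    and f :: "real ^ 'd \<Rightarrow> real ^ 'd"
    and T :: "complex ^ 'd ^ 'd"
    and n :: nat and ds :: "nat \<Rightarrow> nat" and lam :: "nat \<Rightarrow> complex" and eta :: "nat \<Rightarrow> bool"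
    and blk pos :: "'d \<Rightarrow> nat"
  assumes "0 < \<alpha>" "\<alpha> < 1" "0 < \<rho>" "0 < t0"
    and spec: "\<And>z v. v \<noteq> 0 \<Longrightarrow> cmat_of A *v v = z *s v \<Longrightarrow> \<alpha> * pi / 2 < \<bar>Arg z\<bar>"
    and f_loclip: "\<And>R. 0 < R \<Longrightarrow> bdd_above (lip_quot rnorm f R)"
    and f0: "f 0 = 0"
    and f_lim: "((\<lambda>R. lip_const rnorm f R) \<longlongrightarrow> 0) (at_right 0)"
    and blocks: "bij_betw (\<lambda>k. (blk k, pos k)) UNIV {(i, j). i < n \<and> j < ds i}"
    and ds_pos: "\<And>i. i < n \<Longrightarrow> 1 \<le> ds i"
    and T_inv: "invertible T"
    and jordan: "matrix_inv T ** cmat_of A ** T = jordan_mat blk pos lam eta"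
    and C_pos: "0 < C"
    and C_bound: "\<And>i a t. i < n \<Longrightarrow> 0 < a \<Longrightarrow> a \<le> t \<Longrightarrow>
         (\<lambda>s. cmod (kern \<alpha> \<rho> (lam i) t s)) integrable_on {a..t}
         \<and> integral {a..t} (\<lambda>s. cmod (kern \<alpha> \<rho> (lam i) t s)) \<le> C"
    and r_pos: "0 < r"
    and q_lt: "C * lip_const cnorm (hfun blk pos eta (1 / (2 * C)) T f) r < 1"
  shows "\<forall>x. cnorm x \<le>
            r * (1 - C * lip_const cnorm (hfun blk pos eta (1 / (2 * C)) T f) r)
              / Max ((\<lambda>i. SUP t\<in>{t0..}. cmod (mittag_leffler \<alpha> 1 (lam i
                   * complex_of_real (((t powr \<rho> - t0 powr \<rho>) / \<rho>) powr \<alpha>)))) ` {..<n})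
         \<longrightarrow> (\<forall>\<xi>\<in>Cball t0 r.
                Fop \<alpha> \<rho> t0 blk lam (hfun blk pos eta (1 / (2 * C)) T f) x \<xi> \<in> Cball t0 r)
           \<and> (\<forall>\<xi>\<in>Cball t0 r. \<forall>\<xi>'\<in>Cball t0 r.
                sup_norm t0 (\<lambda>t. Fop \<alpha> \<rho> t0 blk lam (hfun blk pos eta (1 / (2 * C)) T f) x \<xi> t
                                 - Fop \<alpha> \<rho> t0 blk lam (hfun blk pos eta (1 / (2 * C)) T f) x \<xi>' t)
                \<le> C * lip_const cnorm (hfun blk pos eta (1 / (2 * C)) T f) r
                    * sup_norm t0 (\<lambda>t. \<xi> t - \<xi>' t))"
proof -
  note a = \<open>0 < \<alpha>\<close> and r = \<open>0 < \<rho>\<close> and t0 = \<open>0 < t0\<close>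
  define h where "h = hfun blk pos eta (1 / (2 * C)) T f"
  define L where "L = lip_const cnorm h r"
  define E where "E i t = mittag_leffler \<alpha> 1 (lam i * complex_of_real (((t powr \<rho> - t0 powr \<rho>) / \<rho>) powr \<alpha>))" for i t
  define S where "S i = (SUP t\<in>{t0..}. cmod (E i t))" for i
  define Mx where "Mx = Max (S ` {..<n})"
  have blk_lt: "blk k < n" for k
    using bij_betwE[OF blocks] by auto
  have n0: "0 < n" using blk_lt[of undefined] by simp
  have Kint: "(\<lambda>s. cmod (kern \<alpha> \<rho> (lam i) t s)) integrable_on {t0..t}"
    and KC: "integral {t0..t} (\<lambda>s. cmod (kern \<alpha> \<rho> (lam i) t s)) \<le> C"
    if "i < n" "t0 \<le> t" for i t
    using C_bound[OF that(1) t0 that(2)] by auto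
  have Eb: "cmod (E i t) \<le> 1 + cmod (lam i) * C" if "i < n" "t0 \<le> t" for i t
    unfolding E_def by (rule ml_bound[OF a r t0 that(2) Kint[OF that] KC[OF that]])
  have bddS: "bdd_above ((\<lambda>t. cmod (E i t)) ` {t0..})" if "i < n" for i
    by (rule bdd_aboveI2[where M="1 + cmod (lam i) * C"]) (use Eb that in auto)
  have ES: "cmod (E i t) \<le> S i" if "i < n" "t0 \<le> t" for i t
    unfolding S_def by (rule cSUP_upper[OF _ bddS[OF that(1)]]) (use that in auto)
  have E0: "E i t0 = 1" for i unfolding E_def by (simp add: ml_zero)
  have S1: "1 \<le> S i" if "i < n" for i using ES[OF that, of t0] E0[of i] by simp
  have SMx: "S i \<le> Mx" if "i < n" for i unfolding Mx_def by (rule Max_ge) (use that in auto)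
  have Mx1: "1 \<le> Mx" using S1[OF n0] SMx[OF n0] by simp
  obtain K where K: "\<And>y z. cnorm y \<le> r \<Longrightarrow> cnorm z \<le> r \<Longrightarrow> cnorm (h y - h z) \<le> K * cnorm (y - z)"
    using hfun_lip_exists[OF f_loclip, of r blk pos eta "1 / (2 * C)" T] unfolding h_def by blast
  have bddL: "bdd_above (lip_quot cnorm h r)"
  proof (rule bdd_aboveI)
    fix u assume "u \<in> lip_quot cnorm h r"
    then obtain y z where u: "u = cnorm (h y - h z) / cnorm (y - z)" and yz: "cnorm y \<le> r" "cnorm z \<le> r" "y \<noteq> z"
      unfolding lip_quot_def by blast
    have "0 < cnorm (y - z)" using yz by (intro cnorm_pos) simp
    thus "u \<le> K" using K[OF yz(1,2)] u by (simp add: divide_le_eq)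
  qed
  have hlip: "cnorm (h y - h z) \<le> L * cnorm (y - z)" if yz: "cnorm y \<le> r" "cnorm z \<le> r" for y z
  proof (cases "y = z")
    case True thus ?thesis by simp
  next
    case False
    have pos: "0 < cnorm (y - z)" using False by (intro cnorm_pos) simp
    have "cnorm (h y - h z) / cnorm (y - z) \<in> lip_quot cnorm h r"
      unfolding lip_quot_def using yz False by blast
    hence "cnorm (h y - h z) / cnorm (y - z) \<le> L" unfolding L_def lip_const_def
      by (rule cSup_upper[OF _ bddL])
    thus ?thesis using pos by (simp add: divide_le_eq mult.commute)
  qed
  have L0: "0 \<le> L"
  proof -
    define y :: "complex ^ 'd" where "y = (\<chi> i. complex_of_real r)"
    have y: "cnorm y \<le> r" unfolding y_def by (rule cnorm_le) (use r_pos in simp)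
    have "y $ undefined \<noteq> 0" unfolding y_def using r_pos by simp
    hence yne: "y \<noteq> 0" by auto
    have "cnorm (h y - h 0) / cnorm (y - 0) \<in> lip_quot cnorm h r"
      unfolding lip_quot_def
      by (rule CollectI, rule exI[of _ y], rule exI[of _ 0]) (use y yne r_pos in auto)
    moreover have "0 \<le> cnorm (h y - h 0) / cnorm (y - 0)" by (simp add: cnorm_nonneg)
    ultimately show ?thesis unfolding L_def lip_const_def by (rule cSup_upper2[OF _ _ bddL])
  qed
  have h0: "h 0 = 0" unfolding h_def by (rule hfun_zero[of f, OF f0])
  have hcont: "continuous_on {y. cnorm y \<le> r} h"
  proof (rule lipschitz_on_continuous_on)
    show "(of_nat CARD('d) * L)-lipschitz_on {y. cnorm y \<le> r} h"
    proof (rule lipschitz_onI)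
      fix y z :: "complex ^ 'd" assume "y \<in> {y. cnorm y \<le> r}" "z \<in> {y. cnorm y \<le> r}"
      hence yz: "cnorm y \<le> r" "cnorm z \<le> r" by auto
      have "dist (h y) (h z) \<le> of_nat CARD('d) * cnorm (h y - h z)"
        by (simp add: dist_norm norm_le_cnorm)
      also have "\<dots> \<le> of_nat CARD('d) * (L * cnorm (y - z))"
        by (intro mult_left_mono hlip yz) auto
      also have "\<dots> \<le> of_nat CARD('d) * (L * dist y z)"
        using cnorm_le_norm[of "y - z"] L0 by (intro mult_left_mono) (auto simp: dist_norm)
      finally show "dist (h y) (h z) \<le> of_nat CARD('d) * L * dist y z" by (simp add: mult_ac)
    qed (use L0 in simp)
  qed
  have ball: "continuous_on {t0..} \<xi>" "\<And>s. t0 \<le> s \<Longrightarrow> cnorm (\<xi> s) \<le> r"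
    if "\<xi> \<in> Cball t0 r" for \<xi> :: "real \<Rightarrow> complex ^ 'd"
  proof -
    from that have c: "continuous_on {t0..} \<xi>" and b: "bdd_above ((\<lambda>t. cnorm (\<xi> t)) ` {t0..})"
      and s: "sup_norm t0 \<xi> \<le> r"
      unfolding Cball_def Cinf_def by auto
    show "continuous_on {t0..} \<xi>" by (rule c)
    fix s assume "t0 \<le> s"
    hence "cnorm (\<xi> s) \<le> sup_norm t0 \<xi>" unfolding sup_norm_def by (intro cSUP_upper b) auto
    thus "cnorm (\<xi> s) \<le> r" using s by simp
  qed
  have hxi_cont: "continuous_on {t0..} (\<lambda>s. h (\<xi> s))" if "\<xi> \<in> Cball t0 r" for \<xi> :: "real \<Rightarrow> complex ^ 'd"
    by (rule continuous_on_compose2[OF hcont ball(1)[OF that]]) (use ball(2)[OF that] in auto)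
  have hxi_bnd: "cmod (h (\<xi> s) $ k) \<le> L * r" if "\<xi> \<in> Cball t0 r" "t0 \<le> s" for \<xi> :: "real \<Rightarrow> complex ^ 'd" and s k
  proof -
    have "cmod (h (\<xi> s) $ k) \<le> cnorm (h (\<xi> s) - h 0)" using cnorm_ge[of "h (\<xi> s)" k] h0 by simp
    also have "\<dots> \<le> L * cnorm (\<xi> s - 0)" by (rule hlip) (use ball(2)[OF that(1) that(2)] r_pos in auto)
    also have "\<dots> \<le> L * r" using ball(2)[OF that] L0 by (simp add: mult_left_mono)
    finally show ?thesis .
  qed
  have Fk: "Fop \<alpha> \<rho> t0 blk lam h x \<xi> t $ k = E (blk k) t * x $ k
      + integral {t0..t} (\<lambda>s. kern \<alpha> \<rho> (lam (blk k)) t s * h (\<xi> s) $ k)" for x \<xi> t k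
    unfolding Fop_def E_def by simp
  have Icont: "continuous_on {t0..} (\<lambda>t. integral {t0..t} (\<lambda>s. kern \<alpha> \<rho> (lam (blk k)) t s * g s))"
    if g: "continuous_on {t0..} g" and B: "\<And>s. t0 \<le> s \<Longrightarrow> norm (g s) \<le> B" for g B k
    by (rule int_cont[OF a r t0 Kint[OF blk_lt] g B])
  have Inorm: "norm (integral {t0..t} (\<lambda>s. kern \<alpha> \<rho> (lam (blk k)) t s * g s)) \<le> B * C"
    if g: "continuous_on {t0..} g" and B: "\<And>s. t0 \<le> s \<Longrightarrow> norm (g s) \<le> B" and B0: "0 \<le> B"
      and t: "t0 \<le> t" for g B k t
  proof -
    have "norm (integral {t0..t} (\<lambda>s. kern \<alpha> \<rho> (lam (blk k)) t s * g s))
        \<le> B * integral {t0..t} (\<lambda>s. cmod (kern \<alpha> \<rho> (lam (blk k)) t s))"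
      by (rule kern_norm_bound[OF a r t0 t Kint[OF blk_lt t]])
         (use g B in \<open>auto intro: continuous_on_subset\<close>)
    also have "\<dots> \<le> B * C" by (intro mult_left_mono KC blk_lt t B0)
    finally show ?thesis .
  qed
  have Ecell: "continuous_on {t0..} (E i)" for i
  proof -
    have "continuous_on {t0..} (\<lambda>t. ((t powr \<rho> - t0 powr \<rho>) / \<rho>) powr \<alpha>)"
    proof (rule continuous_on_powr')
      show "continuous_on {t0..} (\<lambda>t. (t powr \<rho> - t0 powr \<rho>) / \<rho>)"
        using t0 r by (intro continuous_intros) auto
      show "\<forall>t\<in>{t0..}. 0 \<le> (t powr \<rho> - t0 powr \<rho>) / \<rho> \<and> ((t powr \<rho> - t0 powr \<rho>) / \<rho> = 0 \<longrightarrow> 0 < \<alpha>)"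
        using a r t0 by (auto intro!: divide_nonneg_pos powr_mono2)
    qed (rule continuous_on_const)
    thus ?thesis unfolding E_def[abs_def] using a by (intro continuous_on_ml continuous_on_mult_left continuous_on_of_real) auto
  qed
  show ?thesis
    unfolding h_def[symmetric] L_def[symmetric]
  proof (intro allI impI conjI ballI)
    fix x :: "complex ^ 'd"
    assume xb: "cnorm x \<le> r * (1 - C * L) / Max ((\<lambda>i. SUP t\<in>{t0..}. cmod (mittag_leffler \<alpha> 1 (lam i
                   * complex_of_real (((t powr \<rho> - t0 powr \<rho>) / \<rho>) powr \<alpha>)))) ` {..<n})"
    have xb': "Mx * cnorm x \<le> r * (1 - C * L)"
      using xb Mx1 unfolding Mx_def S_def E_def by (simp add: le_divide_eq mult.commute)
    fix \<xi> :: "real \<Rightarrow> complex ^ 'd" assume xi: "\<xi> \<in> Cball t0 r"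
    define F where "F = Fop \<alpha> \<rho> t0 blk lam h x \<xi>"
    have gcont: "continuous_on {t0..} (\<lambda>s. h (\<xi> s) $ k)" for k
      by (intro continuous_on_component hxi_cont xi)
    have gb: "\<And>s. t0 \<le> s \<Longrightarrow> norm (h (\<xi> s) $ k) \<le> L * r" for k
      using hxi_bnd[OF xi] by auto
    have Fcont: "continuous_on {t0..} F"
    proof -
      have eqF: "F = (\<lambda>t. \<chi> k. E (blk k) t * x $ k
          + integral {t0..t} (\<lambda>s. kern \<alpha> \<rho> (lam (blk k)) t s * h (\<xi> s) $ k))"
        unfolding F_def by (simp add: Fk vec_eq_iff fun_eq_iff)
      have "continuous_on {t0..} (\<lambda>t. \<chi> k. E (blk k) t * x $ k
          + integral {t0..t} (\<lambda>s. kern \<alpha> \<rho> (lam (blk k)) t s * h (\<xi> s) $ k))"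
        by (intro continuous_on_vec_lambda continuous_on_add continuous_on_mult_right Ecell
            Icont[OF gcont gb])
      thus ?thesis using eqF by simp
    qed
    have Fb: "cnorm (F t) \<le> r" if t: "t0 \<le> t" for t
    proof (rule cnorm_le)
      fix k
      have "cmod (F t $ k) \<le> cmod (E (blk k) t) * cmod (x $ k)
          + norm (integral {t0..t} (\<lambda>s. kern \<alpha> \<rho> (lam (blk k)) t s * h (\<xi> s) $ k))"
        unfolding F_def Fk by (rule order_trans[OF norm_triangle_ineq]) (simp add: norm_mult)
      also have "\<dots> \<le> Mx * cnorm x + L * r * C"
      proof (rule add_mono)
        have "cmod (E (blk k) t) \<le> Mx" using ES[OF blk_lt[of k] t] SMx[OF blk_lt[of k]] by linarith
        thus "cmod (E (blk k) t) * cmod (x $ k) \<le> Mx * cnorm x"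
          by (intro mult_mono cnorm_ge) (use Mx1 in auto)
        show "norm (integral {t0..t} (\<lambda>s. kern \<alpha> \<rho> (lam (blk k)) t s * h (\<xi> s) $ k)) \<le> L * r * C"
          by (rule Inorm[OF gcont gb _ t]) (use mult_nonneg_nonneg[OF L0 less_imp_le[OF r_pos]] in auto)
      qed
      also have "\<dots> \<le> r * (1 - C * L) + L * r * C" using xb' by simp
      also have "\<dots> = r" by (simp add: algebra_simps)
      finally show "cmod (F t $ k) \<le> r" .
    qed
    show "F \<in> Cball t0 r"
    proof -
      have "bdd_above ((\<lambda>t. cnorm (F t)) ` {t0..})" by (rule bdd_aboveI2[where M=r]) (use Fb in auto)
      moreover have "sup_norm t0 F \<le> r" unfolding sup_norm_def by (rule cSUP_least) (use Fb in auto)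
      ultimately show ?thesis unfolding Cball_def Cinf_def using Fcont by auto
    qed
  next
    fix x :: "complex ^ 'd"
    fix \<xi> \<xi>' :: "real \<Rightarrow> complex ^ 'd" assume xi: "\<xi> \<in> Cball t0 r" and xi': "\<xi>' \<in> Cball t0 r"
    define D where "D = sup_norm t0 (\<lambda>t. \<xi> t - \<xi>' t)"
    have bddD: "bdd_above ((\<lambda>t. cnorm (\<xi> t - \<xi>' t)) ` {t0..})"
    proof (rule bdd_aboveI2[where M="r + r"])
      fix t assume "t \<in> {t0..}"
      thus "cnorm (\<xi> t - \<xi>' t) \<le> r + r"
        using cnorm_diff[of "\<xi> t" "\<xi>' t"] ball(2)[OF xi, of t] ball(2)[OF xi', of t] by auto
    qed
    have Dle: "cnorm (\<xi> s - \<xi>' s) \<le> D" if "t0 \<le> s" for s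
      unfolding D_def sup_norm_def by (rule cSUP_upper[OF _ bddD]) (use that in auto)
    have D0: "0 \<le> D" using Dle[of t0] cnorm_nonneg[of "\<xi> t0 - \<xi>' t0"] by auto
    have diffb: "cnorm (Fop \<alpha> \<rho> t0 blk lam h x \<xi> t - Fop \<alpha> \<rho> t0 blk lam h x \<xi>' t) \<le> C * L * D"
      if t: "t0 \<le> t" for t
    proof (rule cnorm_le)
      fix k
      define g where "g s = h (\<xi> s) $ k" for s
      define g' where "g' s = h (\<xi>' s) $ k" for s
      have gc: "continuous_on {t0..} g" unfolding g_def by (intro continuous_on_component hxi_cont xi)
      have gc': "continuous_on {t0..} g'" unfolding g'_def by (intro continuous_on_component hxi_cont xi')
      have gbd: "norm (g s) \<le> L * r" if "t0 \<le> s" for s unfolding g_def using hxi_bnd[OF xi that] by simp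
      have gbd': "norm (g' s) \<le> L * r" if "t0 \<le> s" for s unfolding g'_def using hxi_bnd[OF xi' that] by simp
      have sub: "continuous_on {t0..t} g" "continuous_on {t0..t} g'"
        using gc gc' by (auto intro: continuous_on_subset)
      have i1: "(\<lambda>s. kern \<alpha> \<rho> (lam (blk k)) t s * g s) integrable_on {t0..t}"
        by (rule kern_integrable[OF a r t0 t Kint[OF blk_lt t] sub(1)]) (use gbd in auto)
      have i2: "(\<lambda>s. kern \<alpha> \<rho> (lam (blk k)) t s * g' s) integrable_on {t0..t}"
        by (rule kern_integrable[OF a r t0 t Kint[OF blk_lt t] sub(2)]) (use gbd' in auto)
      have "(Fop \<alpha> \<rho> t0 blk lam h x \<xi> t - Fop \<alpha> \<rho> t0 blk lam h x \<xi>' t) $ k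
          = integral {t0..t} (\<lambda>s. kern \<alpha> \<rho> (lam (blk k)) t s * g s)
            - integral {t0..t} (\<lambda>s. kern \<alpha> \<rho> (lam (blk k)) t s * g' s)"
        by (simp add: Fk g_def g'_def)
      also have "\<dots> = integral {t0..t} (\<lambda>s. kern \<alpha> \<rho> (lam (blk k)) t s * (g s - g' s))"
        using integral_diff[OF i1 i2] by (simp add: algebra_simps)
      finally have eq: "(Fop \<alpha> \<rho> t0 blk lam h x \<xi> t - Fop \<alpha> \<rho> t0 blk lam h x \<xi>' t) $ k
          = integral {t0..t} (\<lambda>s. kern \<alpha> \<rho> (lam (blk k)) t s * (g s - g' s))" .
      have dc: "continuous_on {t0..} (\<lambda>s. g s - g' s)" by (intro continuous_on_diff gc gc')
      have db: "norm (g s - g' s) \<le> L * D" if "t0 \<le> s" for s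
      proof -
        have "norm (g s - g' s) = cmod ((h (\<xi> s) - h (\<xi>' s)) $ k)" by (simp add: g_def g'_def)
        also have "\<dots> \<le> cnorm (h (\<xi> s) - h (\<xi>' s))" by (rule cnorm_ge)
        also have "\<dots> \<le> L * cnorm (\<xi> s - \<xi>' s)" by (rule hlip) (use ball(2)[OF xi that] ball(2)[OF xi' that] in auto)
        also have "\<dots> \<le> L * D" by (intro mult_left_mono Dle that L0)
        finally show ?thesis .
      qed
      have "cmod ((Fop \<alpha> \<rho> t0 blk lam h x \<xi> t - Fop \<alpha> \<rho> t0 blk lam h x \<xi>' t) $ k) \<le> L * D * C"
        unfolding eq by (rule Inorm[OF dc db _ t]) (use mult_nonneg_nonneg[OF L0 D0] in auto)
      thus "cmod ((Fop \<alpha> \<rho> t0 blk lam h x \<xi> t - Fop \<alpha> \<rho> t0 blk lam h x \<xi>' t) $ k) \<le> C * L * D"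
        by (simp add: mult_ac)
    qed
    show "sup_norm t0 (\<lambda>t. Fop \<alpha> \<rho> t0 blk lam h x \<xi> t - Fop \<alpha> \<rho> t0 blk lam h x \<xi>' t)
        \<le> C * L * sup_norm t0 (\<lambda>t. \<xi> t - \<xi>' t)"
    proof -
      have "sup_norm t0 (\<lambda>t. Fop \<alpha> \<rho> t0 blk lam h x \<xi> t - Fop \<alpha> \<rho> t0 blk lam h x \<xi>' t) \<le> C * L * D"
        unfolding sup_norm_def by (rule cSUP_least) (use diffb in auto)
      thus ?thesis unfolding D_def .
    qed
  qed
qed

end
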